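(* Let $B$ be an nbc basis of $M$ with $|\mathrm{IA}(B)|=k+1$. Write $B-\mathrm{IA}(B)=\{e_1>\cdots>e_{r-k}\}$ and $(E-B)-\min(E-B)=\{e_{r-k+1}<\cdots<e_{n-k-1}\}$. Define pairs $F_j|G_j$ for $1\le j\le n-k-1$ by \[ F_j|G_j=\begin{cases}\mathrm{cl}\{e_1,\dots,e_j\}\,|\,E & 1\le j\le r-k,\\ E\,|\,\mathrm{cl}^\perp\{e_j,e_{j+1},\dots,e_{n-k-1}\} & r-k+1\le j\le n-k-1.\end{cases} \] Then $\{F_1|G_1,\dots,F_{n-k-1}|G_{n-k-1}\}$ is a biflag of $M$ (the nbc biflag $\mathcal F(B)|\mathcal G(B)$).
   Context: Let $M$ be a matroid with no loops and no coloops on the ground set $E=\{0,1,\dots,n\}$, totally ordered by the usual order of integers, of rank $r+1$; its dual $M^\perp$ has rank $n-r$. Write $\mathrm{cl}$, $\mathrm{cl}^\perp$ for the closure operators of $M$, $M^\perp$. A biflat of $M$ is a pair $F|G$ where $F$ is a flat of $M$, $G$ is a flat of $M^\perp$, both are nonempty, they are not both equal to $E$, and $F\cup G=E$. Two biflats $F|G$, $F'|G'$ are compatible if ($F\subseteq F'$ and $G\supseteq G'$) or ($F\supseteq F'$ and $G\subseteq G'$). A biflag is a set of pairwise compatible biflats with $\bigcup_{F|G}(F\cap G)\neq E$. For a basis $B$ and $i\in B$, $C^\perp(B,i)$ is the unique cocircuit of $M$ contained in $(E-B)\cup i$ and containing $i$; for $i\notin B$, $C(B,i)$ is the unique circuit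 contained in $B\cup i$ and containing $i$. $\mathrm{IA}(B)=\{i\in B: i=\min C^\perp(B,i)\}$, $\mathrm{EA}(B)=\{i\notin B: i=\min C(B,i)\}$. $B$ is an nbc basis if $\mathrm{EA}(B)=\emptyset$. *)

theory Defs
  imports Main
begin

definition matroid_bases :: "'a set \<Rightarrow> 'a set set \<Rightarrow> bool" where
  "matroid_bases E Bs \<longleftrightarrow> finite E \<and> Bs \<noteq> {} \<and> (\<forall>B\<in>Bs. B \<subseteq> E) \<and>
     (\<forall>B1\<in>Bs. \<forall>B2\<in>Bs. \<forall>x\<in>B1 - B2. \<exists>y\<in>B2 - B1. insert y (B1 - {x}) \<in> Bs)"

definition indep :: "'a set set \<Rightarrow> 'a set \<Rightarrow> bool" where
  "indep Bs X \<longleftrightarrow> (\<exists>B\<in>Bs. X \<subseteq> B)"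

definition rk :: "'a set set \<Rightarrow> 'a set \<Rightarrow> nat" where
  "rk Bs X = Max {card Y | Y. Y \<subseteq> X \<and> indep Bs Y}"

definition cl :: "'a set \<Rightarrow> 'a set set \<Rightarrow> 'a set \<Rightarrow> 'a set" where
  "cl E Bs X = {x \<in> E. rk Bs (insert x X) = rk Bs X}"

definition is_flat :: "'a set \<Rightarrow> 'a set set \<Rightarrow> 'a set \<Rightarrow> bool" where
  "is_flat E Bs F \<longleftrightarrow> F \<subseteq> E \<and> cl E Bs F = F"

definition dual_bases :: "'a set \<Rightarrow> 'a set set \<Rightarrow> 'a set set" where
  "dual_bases E Bs = (\<lambda>B. E - B) ` Bs"

definition is_circuit :: "'a set \<Rightarrow> 'a set set \<Rightarrow> 'a set \<Rightarrow> bool" where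
  "is_circuit E Bs C \<longleftrightarrow> C \<subseteq> E \<and> \<not> indep Bs C \<and> (\<forall>x\<in>C. indep Bs (C - {x}))"

definition is_cocircuit :: "'a set \<Rightarrow> 'a set set \<Rightarrow> 'a set \<Rightarrow> bool" where
  "is_cocircuit E Bs C \<longleftrightarrow> is_circuit E (dual_bases E Bs) C"

definition is_loop :: "'a set \<Rightarrow> 'a set set \<Rightarrow> 'a \<Rightarrow> bool" where
  "is_loop E Bs x \<longleftrightarrow> x \<in> E \<and> (\<forall>B\<in>Bs. x \<notin> B)"

definition is_coloop :: "'a set \<Rightarrow> 'a set set \<Rightarrow> 'a \<Rightarrow> bool" where
  "is_coloop E Bs x \<longleftrightarrow> x \<in> E \<and> (\<forall>B\<in>Bs. x \<in> B)"

text \<open>Fundamental circuit C(B,i) (i not in B) and fundamental cocircuit C-perp(B,i) (i in B).\<close>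
definition fund_circuit :: "'a set \<Rightarrow> 'a set set \<Rightarrow> 'a set \<Rightarrow> 'a \<Rightarrow> 'a set" where
  "fund_circuit E Bs B i = (THE C. is_circuit E Bs C \<and> C \<subseteq> insert i B \<and> i \<in> C)"

definition fund_cocircuit :: "'a set \<Rightarrow> 'a set set \<Rightarrow> 'a set \<Rightarrow> 'a \<Rightarrow> 'a set" where
  "fund_cocircuit E Bs B i = (THE C. is_cocircuit E Bs C \<and> C \<subseteq> insert i (E - B) \<and> i \<in> C)"

definition IA :: "'a::linorder set \<Rightarrow> 'a set set \<Rightarrow> 'a set \<Rightarrow> 'a set" where
  "IA E Bs B = {i \<in> B. i = Min (fund_cocircuit E Bs B i)}"

definition EA :: "'a::linorder set \<Rightarrow> 'a set set \<Rightarrow> 'a set \<Rightarrow> 'a set" where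
  "EA E Bs B = {i \<in> E - B. i = Min (fund_circuit E Bs B i)}"

definition nbc_basis :: "'a::linorder set \<Rightarrow> 'a set set \<Rightarrow> 'a set \<Rightarrow> bool" where
  "nbc_basis E Bs B \<longleftrightarrow> B \<in> Bs \<and> EA E Bs B = {}"

definition is_biflat :: "'a set \<Rightarrow> 'a set set \<Rightarrow> 'a set \<times> 'a set \<Rightarrow> bool" where
  "is_biflat E Bs FG \<longleftrightarrow> (case FG of (F, G) \<Rightarrow>
     is_flat E Bs F \<and> is_flat E (dual_bases E Bs) G \<and> F \<noteq> {} \<and> G \<noteq> {} \<and>
     \<not> (F = E \<and> G = E) \<and> F \<union> G = E)"

definition compatible :: "'a set \<times> 'a set \<Rightarrow> 'a set \<times> 'a set \<Rightarrow> bool" where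
  "compatible FG FG' \<longleftrightarrow> (case FG of (F, G) \<Rightarrow> case FG' of (F', G') \<Rightarrow>
     (F \<subseteq> F' \<and> G' \<subseteq> G) \<or> (F' \<subseteq> F \<and> G \<subseteq> G'))"

definition is_biflag :: "'a set \<Rightarrow> 'a set set \<Rightarrow> ('a set \<times> 'a set) set \<Rightarrow> bool" where
  "is_biflag E Bs S \<longleftrightarrow> (\<forall>FG\<in>S. is_biflat E Bs FG) \<and>
     (\<forall>FG\<in>S. \<forall>FG'\<in>S. compatible FG FG') \<and>
     (\<Union>(F, G)\<in>S. F \<inter> G) \<noteq> E"

end

theory Submission
  imports Defs
begin

locale mat =
  fixes E :: "'a set" and Bs :: "'a set set"
  assumes mb: "matroid_bases E Bs"
    and eqc: "\<And>B B'. B \<in> Bs \<Longrightarrow> B' \<in> Bs \<Longrightarrow> card B = card B'"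
begin

lemma finE: "finite E" using mb by (simp add: matroid_bases_def)
lemma Bs_ne: "Bs \<noteq> {}" using mb by (simp add: matroid_bases_def)
lemma B_sub: "B \<in> Bs \<Longrightarrow> B \<subseteq> E" using mb by (auto simp add: matroid_bases_def)
lemma exch: "B1 \<in> Bs \<Longrightarrow> B2 \<in> Bs \<Longrightarrow> x \<in> B1 - B2 \<Longrightarrow> \<exists>y\<in>B2 - B1. insert y (B1 - {x}) \<in> Bs"
  using mb unfolding matroid_bases_def by blast

lemma indep_subset: "indep Bs Y \<Longrightarrow> X \<subseteq> Y \<Longrightarrow> indep Bs X"
  unfolding indep_def by blast
lemma indep_sub_E: "indep Bs Y \<Longrightarrow> Y \<subseteq> E"
  unfolding indep_def using B_sub by blast
lemma indep_fin: "indep Bs Y \<Longrightarrow> finite Y"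
  using indep_sub_E finE finite_subset by blast
lemma indep_empty: "indep Bs {}"
  using Bs_ne unfolding indep_def by blast
lemma basis_indep: "B \<in> Bs \<Longrightarrow> indep Bs B"
  unfolding indep_def by blast

lemma indep_card: "indep Bs Y \<Longrightarrow> B \<in> Bs \<Longrightarrow> card Y \<le> card B"
proof -
  assume "indep Bs Y" "B \<in> Bs"
  then obtain B' where "B' \<in> Bs" "Y \<subseteq> B'" unfolding indep_def by blast
  then have "card Y \<le> card B'" using B_sub finE finite_subset card_mono by metis
  then show ?thesis using eqc \<open>B \<in> Bs\<close> \<open>B' \<in> Bs\<close> by metis
qed

lemma indep_card_eq_basis: "indep Bs Y \<Longrightarrow> B \<in> Bs \<Longrightarrow> card Y = card B \<Longrightarrow> Y \<in> Bs"
proof -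
  assume a: "indep Bs Y" "B \<in> Bs" "card Y = card B"
  then obtain B' where b: "B' \<in> Bs" "Y \<subseteq> B'" unfolding indep_def by blast
  have "finite B'" using b B_sub finE finite_subset by metis
  moreover have "card Y = card B'" using a b eqc by metis
  ultimately have "Y = B'" using b card_subset_eq by metis
  then show ?thesis using b by simp
qed

lemma augment:
  assumes I: "indep Bs I" and J: "indep Bs J" and lt: "card I < card J"
  shows "\<exists>x\<in>J - I. indep Bs (insert x I)"
proof (rule ccontr)
  assume na: "\<not> ?thesis"
  obtain BJ where BJ: "BJ \<in> Bs" "J \<subseteq> BJ" using J unfolding indep_def by blast
  obtain B0 where B0: "B0 \<in> Bs" "I \<subseteq> B0" using I unfolding indep_def by blast
  obtain BI where BI: "BI \<in> Bs \<and> I \<subseteq> BI"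
    and mn: "\<forall>B'. B' \<in> Bs \<and> I \<subseteq> B' \<longrightarrow> card (BJ - BI) \<le> card (BJ - B')"
    using ex_has_least_nat[of "\<lambda>B'. B' \<in> Bs \<and> I \<subseteq> B'" B0 "\<lambda>B'. card (BJ - B')"] B0 by blast
  have finBJ: "finite BJ" using BJ B_sub finE finite_subset by metis
  have finBI: "finite BI" using BI B_sub finE finite_subset by metis
  have c1: "BI - I \<subseteq> BJ"
  proof
    fix x assume x: "x \<in> BI - I"
    show "x \<in> BJ"
    proof (rule ccontr)
      assume "x \<notin> BJ"
      then obtain y where y: "y \<in> BJ - BI" "insert y (BI - {x}) \<in> Bs"
        using exch[of BI BJ x] BI BJ x by blast
      have "I \<subseteq> insert y (BI - {x})" using BI x by blast
      then have le: "card (BJ - BI) \<le> card (BJ - insert y (BI - {x}))" using mn y by blast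
      have "BJ - insert y (BI - {x}) \<subset> BJ - BI" using y \<open>x \<notin> BJ\<close> by blast
      then have "card (BJ - insert y (BI - {x})) < card (BJ - BI)"
        using finBJ by (meson finite_Diff psubset_card_mono)
      then show False using le by simp
    qed
  qed
  have c2: "\<forall>x\<in>J - I. x \<notin> BI"
  proof
    fix x assume x: "x \<in> J - I"
    show "x \<notin> BI"
    proof
      assume "x \<in> BI"
      then have "indep Bs (insert x I)" using BI unfolding indep_def by blast
      then show False using na x by blast
    qed
  qed
  have "BI \<subseteq> I \<union> (BJ - J)" using c1 c2 by blast
  then have "card BI \<le> card (I \<union> (BJ - J))"
    using finBJ indep_fin[OF I] by (meson card_mono finite_Diff finite_UnI)
  also have "\<dots> \<le> card I + card (BJ - J)" by (rule card_Un_le)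
  also have "card (BJ - J) = card BJ - card J" using BJ finBJ card_Diff_subset finite_subset by metis
  finally have "card BI \<le> card I + (card BJ - card J)" .
  moreover have "card J \<le> card BJ" using BJ finBJ card_mono by metis
  moreover have "card BI = card BJ" using BI BJ eqc by metis
  ultimately show False using lt by linarith
qed

definition RS where "RS X = {card Y | Y. Y \<subseteq> X \<and> indep Bs Y}"

lemma RS_fin: "finite (RS X)"
proof -
  obtain B0 where "B0 \<in> Bs" using Bs_ne by blast
  then have "RS X \<subseteq> {..card B0}" unfolding RS_def using indep_card by auto
  then show ?thesis using finite_subset by blast
qed

lemma RS_ne: "RS X \<noteq> {}"
  unfolding RS_def using indep_empty by blast

lemma rk_RS: "rk Bs X = Max (RS X)" unfolding rk_def RS_def by simp

lemma rk_ge: "Y \<subseteq> X \<Longrightarrow> indep Bs Y \<Longrightarrow> card Y \<le> rk Bs X"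
proof -
  assume "Y \<subseteq> X" "indep Bs Y"
  then have "card Y \<in> RS X" unfolding RS_def by blast
  then show ?thesis unfolding rk_RS using RS_fin Max_ge by blast
qed

lemma rk_obtain: "\<exists>Y. Y \<subseteq> X \<and> indep Bs Y \<and> card Y = rk Bs X"
proof -
  have "Max (RS X) \<in> RS X" using RS_fin RS_ne by (rule Max_in)
  then have "\<exists>Y. Max (RS X) = card Y \<and> Y \<subseteq> X \<and> indep Bs Y" unfolding RS_def by (rule CollectD)
  then show ?thesis unfolding rk_RS by metis
qed

lemma rk_indep: "indep Bs X \<Longrightarrow> rk Bs X = card X"
proof -
  assume a: "indep Bs X"
  obtain Y where "Y \<subseteq> X" "indep Bs Y" "card Y = rk Bs X" using rk_obtain by blast
  moreover have "card Y \<le> card X" using \<open>Y \<subseteq> X\<close> indep_fin[OF a] card_mono by blast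
  ultimately show ?thesis using rk_ge[of X X] a by simp
qed

lemma rk_mono: "X \<subseteq> Y \<Longrightarrow> rk Bs X \<le> rk Bs Y"
proof -
  assume a: "X \<subseteq> Y"
  obtain Z where "Z \<subseteq> X" "indep Bs Z" "card Z = rk Bs X" using rk_obtain by blast
  then show ?thesis using rk_ge[of Z Y] a by simp
qed

lemma ext_aux: "\<forall>I. indep Bs I \<and> I \<subseteq> X \<and> rk Bs X - card I = d \<longrightarrow>
   (\<exists>W. I \<subseteq> W \<and> W \<subseteq> X \<and> indep Bs W \<and> card W = rk Bs X)"
proof (induction d rule: less_induct)
  case (less d)
  show ?case
  proof (intro allI impI)
    fix I assume a: "indep Bs I \<and> I \<subseteq> X \<and> rk Bs X - card I = d"
    obtain J where J: "J \<subseteq> X" "indep Bs J" "card J = rk Bs X" using rk_obtain by blast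
    have le: "card I \<le> rk Bs X" using rk_ge a by blast
    show "\<exists>W. I \<subseteq> W \<and> W \<subseteq> X \<and> indep Bs W \<and> card W = rk Bs X"
    proof (cases "card I < card J")
      case True
      then obtain x where x: "x \<in> J - I" "indep Bs (insert x I)" using augment a J by blast
      have c: "card (insert x I) = card I + 1" using x indep_fin a by simp
      have "insert x I \<subseteq> X" using x J a by blast
      moreover have lt: "rk Bs X - card (insert x I) < d" using c a True J by linarith
      ultimately obtain W where "insert x I \<subseteq> W \<and> W \<subseteq> X \<and> indep Bs W \<and> card W = rk Bs X"
        using less.IH[OF lt, rule_format, of "insert x I"] x by blast
      then show ?thesis by blast
    next
      case False
      then show ?thesis using a le J by (intro exI[of _ I]) auto
    qed
  qed
qed

lemma ext: "indep Bs I \<Longrightarrow> I \<subseteq> X \<Longrightarrow> \<exists>W. I \<subseteq> W \<and> W \<subseteq> X \<and> indep Bs W \<and> card W = rk Bs X"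
  using ext_aux by blast

lemma cl_sub: "cl E Bs X \<subseteq> E" unfolding cl_def by blast

lemma sub_cl: "X \<subseteq> E \<Longrightarrow> X \<subseteq> cl E Bs X"
  unfolding cl_def by (auto simp: insert_absorb)

lemma cl_mono:
  assumes XY: "X \<subseteq> Y" shows "cl E Bs X \<subseteq> cl E Bs Y"
proof
  fix x assume "x \<in> cl E Bs X"
  then have xE: "x \<in> E" and rx: "rk Bs (insert x X) = rk Bs X" unfolding cl_def by auto
  have ge: "rk Bs Y \<le> rk Bs (insert x Y)" by (rule rk_mono) blast
  have "\<not> rk Bs Y < rk Bs (insert x Y)"
  proof
    assume lt: "rk Bs Y < rk Bs (insert x Y)"
    obtain Y' where Y': "Y' \<subseteq> X" "indep Bs Y'" "card Y' = rk Bs X" using rk_obtain by blast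
    obtain W where W: "Y' \<subseteq> W" "W \<subseteq> Y" "indep Bs W" "card W = rk Bs Y"
      using ext[of Y' Y] Y' XY by blast
    obtain Z where Z: "Z \<subseteq> insert x Y" "indep Bs Z" "card Z = rk Bs (insert x Y)" using rk_obtain by blast
    obtain z where z: "z \<in> Z - W" "indep Bs (insert z W)" using augment[of W Z] W Z lt by auto
    have cz: "card (insert z W) = rk Bs Y + 1" using z W indep_fin by simp
    show False
    proof (cases "z \<in> Y")
      case True
      then have "card (insert z W) \<le> rk Bs Y" using rk_ge[of "insert z W" Y] z W by blast
      then show False using cz by simp
    next
      case False
      then have zx: "z = x" using z Z by blast
      then have xW: "x \<notin> W" using z by blast
      have "indep Bs (insert x Y')" using indep_subset[OF z(2)] zx W by blast
      moreover have "x \<notin> Y'" using xW W by blast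
      then have "card (insert x Y') = rk Bs X + 1" using Y' indep_fin[OF Y'(2)] by simp
      ultimately have "rk Bs X + 1 \<le> rk Bs (insert x X)" using rk_ge[of "insert x Y'" "insert x X"] Y' by auto
      then show False using rx by simp
    qed
  qed
  then have "rk Bs (insert x Y) = rk Bs Y" using ge by simp
  then show "x \<in> cl E Bs Y" using xE unfolding cl_def by simp
qed

lemma rk_cl: "X \<subseteq> E \<Longrightarrow> rk Bs (cl E Bs X) = rk Bs X"
proof -
  assume XE: "X \<subseteq> E"
  have ge: "rk Bs X \<le> rk Bs (cl E Bs X)" using rk_mono sub_cl[OF XE] by blast
  have "\<not> rk Bs X < rk Bs (cl E Bs X)"
  proof
    assume lt: "rk Bs X < rk Bs (cl E Bs X)"
    obtain Y where Y: "Y \<subseteq> X" "indep Bs Y" "card Y = rk Bs X" using rk_obtain by blast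
    obtain Z where Z: "Z \<subseteq> cl E Bs X" "indep Bs Z" "card Z = rk Bs (cl E Bs X)" using rk_obtain by blast
    obtain z where z: "z \<in> Z - Y" "indep Bs (insert z Y)" using augment[of Y Z] Y Z lt by auto
    have "z \<in> cl E Bs X" using z Z by blast
    then have rz: "rk Bs (insert z X) = rk Bs X" unfolding cl_def by simp
    have "card (insert z Y) = rk Bs X + 1" using z Y indep_fin by simp
    moreover have "card (insert z Y) \<le> rk Bs (insert z X)" using rk_ge[of "insert z Y" "insert z X"] Y z by blast
    ultimately show False using rz by simp
  qed
  then show ?thesis using ge by simp
qed

lemma cl_idem: "X \<subseteq> E \<Longrightarrow> cl E Bs (cl E Bs X) = cl E Bs X"
proof
  assume XE: "X \<subseteq> E"
  show "cl E Bs X \<subseteq> cl E Bs (cl E Bs X)" using sub_cl cl_sub by blast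
  show "cl E Bs (cl E Bs X) \<subseteq> cl E Bs X"
  proof
    fix x assume "x \<in> cl E Bs (cl E Bs X)"
    then have xE: "x \<in> E" and rx: "rk Bs (insert x (cl E Bs X)) = rk Bs (cl E Bs X)" unfolding cl_def by auto
    have "rk Bs (insert x X) \<le> rk Bs (insert x (cl E Bs X))" using rk_mono sub_cl[OF XE] by (meson insert_mono)
    moreover have "rk Bs X \<le> rk Bs (insert x X)" by (rule rk_mono) blast
    ultimately have "rk Bs (insert x X) = rk Bs X" using rx rk_cl[OF XE] by simp
    then show "x \<in> cl E Bs X" using xE unfolding cl_def by simp
  qed
qed

lemma flat_cl: "X \<subseteq> E \<Longrightarrow> is_flat E Bs (cl E Bs X)"
  unfolding is_flat_def using cl_sub cl_idem by blast

lemma flat_E: "is_flat E Bs E"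
  unfolding is_flat_def cl_def by (auto simp: insert_absorb)

lemma notin_cl: "indep Bs (insert x S) \<Longrightarrow> x \<notin> S \<Longrightarrow> x \<notin> cl E Bs S"
proof
  assume a: "indep Bs (insert x S)" "x \<notin> S" "x \<in> cl E Bs S"
  have iS: "indep Bs S" using indep_subset a by blast
  have "rk Bs (insert x S) = card S + 1" using rk_indep[OF a(1)] a(2) indep_fin[OF iS] by simp
  moreover have "rk Bs S = card S" using rk_indep[OF iS] .
  ultimately show False using a(3) unfolding cl_def by simp
qed

lemma circuit_exists_aux: "\<forall>X. X \<subseteq> E \<and> \<not> indep Bs X \<and> card X = d \<longrightarrow> (\<exists>C\<subseteq>X. is_circuit E Bs C)"
proof (induction d rule: less_induct)
  case (less d)
  show ?case
  proof (intro allI impI)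
    fix X assume a: "X \<subseteq> E \<and> \<not> indep Bs X \<and> card X = d"
    have finX: "finite X" using a finE finite_subset by blast
    show "\<exists>C\<subseteq>X. is_circuit E Bs C"
    proof (cases "\<forall>x\<in>X. indep Bs (X - {x})")
      case True
      then show ?thesis using a unfolding is_circuit_def by blast
    next
      case False
      then obtain x where x: "x \<in> X" "\<not> indep Bs (X - {x})" by blast
      have lt: "card (X - {x}) < d" using x finX a by (metis card_Diff1_less)
      have "X - {x} \<subseteq> E" using a by blast
      then obtain C where "C \<subseteq> X - {x}" "is_circuit E Bs C"
        using less.IH[OF lt, rule_format, of "X - {x}"] x by blast
      then show ?thesis by blast
    qed
  qed
qed

lemma circuit_exists: "X \<subseteq> E \<Longrightarrow> \<not> indep Bs X \<Longrightarrow> \<exists>C\<subseteq>X. is_circuit E Bs C"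
  using circuit_exists_aux by blast

lemma basis_change:
  assumes B: "B \<in> Bs" and xB: "x \<notin> B" and C: "is_circuit E Bs C" and CB: "C \<subseteq> insert x B"
    and yC: "y \<in> C" and yB: "y \<in> B"
  shows "insert x (B - {y}) \<in> Bs"
proof -
  have finB: "finite B" using B B_sub finE finite_subset by blast
  have iC: "indep Bs (C - {y})" using C yC unfolding is_circuit_def by blast
  have nC: "\<not> indep Bs C" using C unfolding is_circuit_def by blast
  have "rk Bs (insert x B) \<le> card B"
    using rk_obtain[of "insert x B"] indep_card B by metis
  moreover have "card B \<le> rk Bs (insert x B)" using rk_ge[of B "insert x B"] basis_indep[OF B] by blast
  ultimately have rX: "rk Bs (insert x B) = card B" by simp
  obtain W where W: "C - {y} \<subseteq> W" "W \<subseteq> insert x B" "indep Bs W" "card W = card B"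
  proof -
    have "C - {y} \<subseteq> insert x B" using CB by blast
    from ext[OF iC this] show ?thesis using that rX by metis
  qed
  have "y \<notin> W"
  proof
    assume "y \<in> W"
    then have "C \<subseteq> W" using W by blast
    then show False using nC indep_subset W by blast
  qed
  then have WS: "W \<subseteq> insert x (B - {y})" using W by blast
  have c1: "card (B - {y}) = card B - 1" using yB finB by (simp add: card_Diff_singleton)
  have c0: "card B > 0" using yB finB card_gt_0_iff by blast
  have "card (insert x (B - {y})) = Suc (card (B - {y}))" using xB finB by simp
  then have "card (insert x (B - {y})) = card B" using c1 c0 by simp
  then have "W = insert x (B - {y})" using WS W finB by (metis card_subset_eq finite_Diff finite_insert)
  then show ?thesis using indep_card_eq_basis W B by metis
qed

lemma circuit_unique:
  assumes B: "B \<in> Bs" and C1: "is_circuit E Bs C1" "C1 \<subseteq> insert x B" "x \<in> C1"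
    and C2: "is_circuit E Bs C2" "C2 \<subseteq> insert x B" "x \<in> C2"
  shows "C1 = C2"
proof -
  have xB: "x \<notin> B"
  proof
    assume "x \<in> B"
    then have "C1 \<subseteq> B" using C1 by blast
    then show False using C1 B unfolding is_circuit_def indep_def by blast
  qed
  have key: "\<And>C b. is_circuit E Bs C \<Longrightarrow> C \<subseteq> insert x B \<Longrightarrow> b \<in> B \<Longrightarrow>
      (b \<in> C \<longleftrightarrow> insert x (B - {b}) \<in> Bs)"
  proof -
    fix C b assume a: "is_circuit E Bs C" "C \<subseteq> insert x B" "b \<in> B"
    show "(b \<in> C \<longleftrightarrow> insert x (B - {b}) \<in> Bs)"
    proof
      assume "b \<in> C" then show "insert x (B - {b}) \<in> Bs" using basis_change B xB a by blast
    next
      assume i: "insert x (B - {b}) \<in> Bs"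
      show "b \<in> C"
      proof (rule ccontr)
        assume "b \<notin> C"
        then have "C \<subseteq> insert x (B - {b})" using a by blast
        then show False using a(1) i unfolding is_circuit_def indep_def by blast
      qed
    qed
  qed
  have "C1 \<inter> B = C2 \<inter> B" using key C1 C2 by blast
  then show ?thesis using C1 C2 by blast
qed

lemma fund_circuit_eq:
  assumes B: "B \<in> Bs" and C: "is_circuit E Bs C" "C \<subseteq> insert x B" "x \<in> C"
  shows "fund_circuit E Bs B x = C"
  unfolding fund_circuit_def
proof (rule the1_equality)
  show "\<exists>!C. is_circuit E Bs C \<and> C \<subseteq> insert x B \<and> x \<in> C"
    using C circuit_unique[OF B] by blast
  show "is_circuit E Bs C \<and> C \<subseteq> insert x B \<and> x \<in> C" using C by blast
qed

lemma fund_circuit_props: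
  assumes B: "B \<in> Bs" and xE: "x \<in> E" and xB: "x \<notin> B"
  shows "is_circuit E Bs (fund_circuit E Bs B x) \<and> fund_circuit E Bs B x \<subseteq> insert x B
     \<and> x \<in> fund_circuit E Bs B x"
proof -
  have finB: "finite B" using B B_sub finE finite_subset by blast
  have "\<not> indep Bs (insert x B)"
  proof
    assume "indep Bs (insert x B)"
    then have "card (insert x B) \<le> card B" using indep_card B by blast
    then show False using xB finB by simp
  qed
  moreover have "insert x B \<subseteq> E" using B B_sub xE by blast
  ultimately obtain C where C: "C \<subseteq> insert x B" "is_circuit E Bs C" using circuit_exists by blast
  have "x \<in> C"
  proof (rule ccontr)
    assume "x \<notin> C"
    then have "C \<subseteq> B" using C by blast
    then show False using C B unfolding is_circuit_def indep_def by blast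
  qed
  then show ?thesis using fund_circuit_eq[OF B C(2) C(1)] C by simp
qed

lemma dual_mat: "mat E (dual_bases E Bs)"
proof
  show "matroid_bases E (dual_bases E Bs)"
    unfolding matroid_bases_def
  proof (intro conjI ballI)
    show "finite E" by (rule finE)
    show "dual_bases E Bs \<noteq> {}" using Bs_ne unfolding dual_bases_def by blast
    fix D assume "D \<in> dual_bases E Bs" then show "D \<subseteq> E" unfolding dual_bases_def by blast
  next
    fix D1 D2 x assume D1: "D1 \<in> dual_bases E Bs" and D2: "D2 \<in> dual_bases E Bs" and x: "x \<in> D1 - D2"
    obtain B1 where B1: "B1 \<in> Bs" "D1 = E - B1" using D1 unfolding dual_bases_def by blast
    obtain B2 where B2: "B2 \<in> Bs" "D2 = E - B2" using D2 unfolding dual_bases_def by blast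
    have xE: "x \<in> E" "x \<notin> B1" "x \<in> B2" using x B1 B2 by auto
    obtain C where C: "is_circuit E Bs C" "C \<subseteq> insert x B1" "x \<in> C"
      using fund_circuit_props[OF B1(1) xE(1,2)] by blast
    have "\<not> C \<subseteq> B2" using C B2 unfolding is_circuit_def indep_def by blast
    then obtain y where y: "y \<in> C" "y \<notin> B2" by blast
    have yB1: "y \<in> B1" using y C xE by blast
    have nb: "insert x (B1 - {y}) \<in> Bs" using basis_change[OF B1(1) xE(2) C(1) C(2) y(1) yB1] .
    have yE: "y \<in> E" using yB1 B1 B_sub by blast
    have "insert y (D1 - {x}) = E - insert x (B1 - {y})" using B1 yB1 yE xE y by blast
    then have "insert y (D1 - {x}) \<in> dual_bases E Bs" using nb unfolding dual_bases_def by blast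
    moreover have "y \<in> D2 - D1" using B1 B2 yB1 yE y by blast
    ultimately show "\<exists>y\<in>D2 - D1. insert y (D1 - {x}) \<in> dual_bases E Bs" by blast
  qed
next
  fix D D' assume "D \<in> dual_bases E Bs" "D' \<in> dual_bases E Bs"
  then obtain B B' where "B \<in> Bs" "D = E - B" "B' \<in> Bs" "D' = E - B'" unfolding dual_bases_def by blast
  moreover have "card (E - B) = card E - card B" using \<open>B \<in> Bs\<close> B_sub finE by (meson card_Diff_subset finite_subset)
  moreover have "card (E - B') = card E - card B'" using \<open>B' \<in> Bs\<close> B_sub finE by (meson card_Diff_subset finite_subset)
  ultimately show "card D = card D'" using eqc[of B B'] by simp
qed

end

theorem mainTheorem4:
  fixes n r k :: nat and Bs :: "nat set set" and B :: "nat set"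
    and e :: "nat \<Rightarrow> nat" and F G :: "nat \<Rightarrow> nat set"
  defines "E \<equiv> {0..n}"
  assumes M: "matroid_bases E Bs"
    and rank: "\<forall>B'\<in>Bs. card B' = r + 1"
    and noloop: "\<forall>x\<in>E. \<not> is_loop E Bs x"
    and nocoloop: "\<forall>x\<in>E. \<not> is_coloop E Bs x"
    and nbc: "nbc_basis E Bs B"
    and cardIA: "card (IA E Bs B) = k + 1"
    and e_def: "\<And>j. e j = (if j \<le> r - k
                   then rev (sorted_list_of_set (B - IA E Bs B)) ! (j - 1)
                   else sorted_list_of_set ((E - B) - {Min (E - B)}) ! (j - (r - k) - 1))"
    and F_def: "\<And>j. F j = (if j \<le> r - k then cl E Bs (e ` {1..j}) else E)"
    and G_def: "\<And>j. G j = (if j \<le> r - k then E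
                   else cl E (dual_bases E Bs) (e ` {j..n - k - 1}))"
  shows "is_biflag E Bs {(F j, G j) | j. 1 \<le> j \<and> j \<le> n - k - 1}"
proof -
  interpret Mm: mat E Bs
    by unfold_locales (use M rank in auto)
  interpret Dm: mat E "dual_bases E Bs" by (rule Mm.dual_mat)
  have finE: "finite E" unfolding E_def by simp
  have cardE: "card E = n + 1" unfolding E_def by simp
  have E0: "0 \<in> E" unfolding E_def by simp
  have BBs: "B \<in> Bs" and EA0: "EA E Bs B = {}" using nbc unfolding nbc_basis_def by auto
  have BE: "B \<subseteq> E" using Mm.B_sub BBs by blast
  have finB: "finite B" using BE finE finite_subset by blast
  have cardB: "card B = r + 1" using rank BBs by blast
  have IAB: "IA E Bs B \<subseteq> B" unfolding IA_def by blast
  have kr: "k \<le> r" using card_mono[OF finB IAB] cardIA cardB by simp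
  define S where "S = B - IA E Bs B"
  have cardS: "card S = r - k" unfolding S_def using card_Diff_subset[OF finite_subset[OF IAB finB] IAB] cardIA cardB by simp
  have SB: "S \<subseteq> B" unfolding S_def by blast
  have EBne: "E - B \<noteq> {}"
  proof
    assume "E - B = {}"
    then have BEq: "B = E" using BE by blast
    have "\<forall>B'\<in>Bs. B' = E"
    proof
      fix B' assume B': "B' \<in> Bs"
      have "B' \<subseteq> E" using Mm.B_sub B' by blast
      moreover have "card B' = card E" using rank B' cardB BEq by simp
      ultimately show "B' = E" using finE card_subset_eq by blast
    qed
    then have "is_coloop E Bs 0" unfolding is_coloop_def using E0 by blast
    then show False using nocoloop E0 by blast
  qed
  define m where "m = Min (E - B)"
  have mEB: "m \<in> E - B" unfolding m_def using EBne finE by (meson Min_in finite_Diff)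
  have mle: "\<And>x. x \<in> E - B \<Longrightarrow> m \<le> x" unfolding m_def using finE by simp
  define T where "T = (E - B) - {m}"
  have cardEB: "card (E - B) = n - r" using card_Diff_subset[OF finB BE] cardE cardB by simp
  have cardT: "card T = n - r - 1" unfolding T_def using cardEB mEB finE by (simp add: card_Diff_singleton)
  have TE: "T \<subseteq> E" unfolding T_def by blast
  have SE: "S \<subseteq> E" using SB BE by blast
  have EBd: "E - B \<in> dual_bases E Bs" unfolding dual_bases_def using BBs by blast
  have e1: "\<And>i. 1 \<le> i \<Longrightarrow> i \<le> r - k \<Longrightarrow> e i \<in> S"
  proof -
    fix i assume i: "1 \<le> i" "i \<le> r - k"
    have fS: "finite S" using SB finB finite_subset by blast
    have "e i = rev (sorted_list_of_set S) ! (i - 1)" using e_def[of i] i unfolding S_def by simp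
    moreover have "i - 1 < length (rev (sorted_list_of_set S))" using i cardS by simp
    ultimately show "e i \<in> S" using nth_mem fS by (metis set_rev sorted_list_of_set.set_sorted_key_list_of_set)
  qed
  have e2: "\<And>i. r - k < i \<Longrightarrow> i \<le> n - k - 1 \<Longrightarrow> e i \<in> T"
  proof -
    fix i assume i: "r - k < i" "i \<le> n - k - 1"
    have fT: "finite T" using TE finE finite_subset by blast
    have "e i = sorted_list_of_set T ! (i - (r - k) - 1)" using e_def[of i] i unfolding T_def m_def by simp
    moreover have "i - (r - k) - 1 < length (sorted_list_of_set T)" using i cardT kr by simp
    ultimately show "e i \<in> T" using nth_mem fT by (metis sorted_list_of_set.set_sorted_key_list_of_set)
  qed
  have XS: "\<And>j. j \<le> r - k \<Longrightarrow> e ` {1..j} \<subseteq> S" using e1 by auto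
  have YT: "\<And>j. r - k < j \<Longrightarrow> e ` {j..n - k - 1} \<subseteq> T" using e2 by auto
  have mG: "\<And>Y. Y \<subseteq> T \<Longrightarrow> m \<notin> cl E (dual_bases E Bs) Y"
  proof -
    fix Y assume Y: "Y \<subseteq> T"
    have "insert m Y \<subseteq> E - B" using Y mEB unfolding T_def by blast
    then have "indep (dual_bases E Bs) (insert m Y)" using EBd unfolding indep_def by blast
    moreover have "m \<notin> Y" using Y unfolding T_def by blast
    ultimately show "m \<notin> cl E (dual_bases E Bs) Y" by (rule Dm.notin_cl)
  qed
  have iF: "\<And>X. X \<subseteq> S \<Longrightarrow> cl E Bs X \<noteq> E"
  proof -
    fix X assume X: "X \<subseteq> S"
    obtain i where i: "i \<in> IA E Bs B" using cardIA by fastforce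
    have "insert i X \<subseteq> B" using i X IAB SB by blast
    then have "indep Bs (insert i X)" using BBs unfolding indep_def by blast
    moreover have "i \<notin> X" using X i unfolding S_def by blast
    ultimately have "i \<notin> cl E Bs X" by (rule Mm.notin_cl)
    moreover have "i \<in> E" using i IAB BE by blast
    ultimately show "cl E Bs X \<noteq> E" by blast
  qed
  have mF: "\<And>X. X \<subseteq> S \<Longrightarrow> m \<notin> cl E Bs X"
  proof
    fix X assume X: "X \<subseteq> S" and mX: "m \<in> cl E Bs X"
    have XB: "X \<subseteq> B" using X SB by blast
    have mnX: "m \<notin> X" using XB mEB by blast
    have nind: "\<not> indep Bs (insert m X)" using Mm.notin_cl mnX mX by blast
    have "insert m X \<subseteq> E" using XB BE mEB by blast
    then obtain C where C: "C \<subseteq> insert m X" "is_circuit E Bs C" using Mm.circuit_exists nind by blast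
    have mC: "m \<in> C"
    proof (rule ccontr)
      assume "m \<notin> C"
      then have "C \<subseteq> B" using C XB by blast
      then show False using C BBs unfolding is_circuit_def indep_def by blast
    qed
    have CB: "C \<subseteq> insert m B" using C XB by blast
    have fc: "fund_circuit E Bs B m = C" using Mm.fund_circuit_eq[OF BBs C(2) CB mC] .
    have "m \<notin> EA E Bs B" using EA0 by blast
    then have mne: "m \<noteq> Min C" using mEB fc unfolding EA_def by auto
    have finC: "finite C" using C(2) finE finite_subset unfolding is_circuit_def by blast
    define i where "i = Min C"
    have iC: "i \<in> C" unfolding i_def using finC mC Min_in by blast
    have im: "i < m" using Min_le[OF finC mC] mne unfolding i_def by simp
    have iX: "i \<in> X" using iC C im by blast
    then have iS: "i \<in> S" using X by blast
    have iB: "i \<in> B" using iX XB by blast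
    have iE: "i \<in> E" using iB BE by blast
    have fcc: "fund_cocircuit E Bs B i = fund_circuit E (dual_bases E Bs) (E - B) i"
      by (simp add: fund_cocircuit_def fund_circuit_def is_cocircuit_def)
    have iEB: "i \<notin> E - B" using iB by blast
    have P: "is_circuit E (dual_bases E Bs) (fund_circuit E (dual_bases E Bs) (E - B) i)
       \<and> fund_circuit E (dual_bases E Bs) (E - B) i \<subseteq> insert i (E - B)
       \<and> i \<in> fund_circuit E (dual_bases E Bs) (E - B) i"
      by (rule Dm.fund_circuit_props[OF EBd iE iEB])
    define Dc where "Dc = fund_circuit E (dual_bases E Bs) (E - B) i"
    have finD: "finite Dc" using P finE finite_subset unfolding Dc_def by blast
    have "Min Dc = i"
    proof (rule Min_eqI[OF finD])
      fix y assume "y \<in> Dc"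
      then have "y = i \<or> y \<in> E - B" using P unfolding Dc_def by blast
      then show "i \<le> y" using mle im by fastforce
    next
      show "i \<in> Dc" using P unfolding Dc_def by blast
    qed
    then have "i \<in> IA E Bs B" unfolding IA_def using iB fcc Dc_def by simp
    then show False using iS unfolding S_def by blast
  qed
  have mono: "\<And>i j. 1 \<le> i \<Longrightarrow> i \<le> j \<Longrightarrow> j \<le> n - k - 1 \<Longrightarrow> F i \<subseteq> F j \<and> G j \<subseteq> G i"
  proof -
    fix i j assume ij: "1 \<le> i" "i \<le> j" "j \<le> n - k - 1"
    show "F i \<subseteq> F j \<and> G j \<subseteq> G i"
    proof (cases "j \<le> r - k")
      case True
      then have "F i = cl E Bs (e ` {1..i})" "F j = cl E Bs (e ` {1..j})" "G i = E" "G j = E"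
        using F_def G_def ij by auto
      moreover have "e ` {1..i} \<subseteq> e ` {1..j}" using ij by auto
      ultimately show ?thesis using Mm.cl_mono by blast
    next
      case False
      note jF = False
      show ?thesis
      proof (cases "i \<le> r - k")
        case True
        then have "F i = cl E Bs (e ` {1..i})" "F j = E" "G i = E" "G j = cl E (dual_bases E Bs) (e ` {j..n - k - 1})"
          using F_def G_def jF by auto
        then show ?thesis using Mm.cl_sub Dm.cl_sub by blast
      next
        case False
        then have "F i = E" "F j = E" "G i = cl E (dual_bases E Bs) (e ` {i..n - k - 1})"
           "G j = cl E (dual_bases E Bs) (e ` {j..n - k - 1})"
          using F_def G_def jF by auto
        moreover have "e ` {j..n - k - 1} \<subseteq> e ` {i..n - k - 1}" using ij by auto
        ultimately show ?thesis using Dm.cl_mono by blast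
      qed
    qed
  qed
  have biflat: "\<And>j. 1 \<le> j \<Longrightarrow> j \<le> n - k - 1 \<Longrightarrow> is_biflat E Bs (F j, G j)"
  proof -
    fix j assume j: "1 \<le> j" "j \<le> n - k - 1"
    show "is_biflat E Bs (F j, G j)"
    proof (cases "j \<le> r - k")
      case True
      then have FG: "F j = cl E Bs (e ` {1..j})" "G j = E" using F_def G_def by auto
      have X: "e ` {1..j} \<subseteq> S" using XS True by blast
      have "e 1 \<in> e ` {1..j}" using j by simp
      then have "F j \<noteq> {}" using FG Mm.sub_cl X SE by blast
      moreover have "is_flat E Bs (F j)" using FG Mm.flat_cl X SE by auto
      moreover have "is_flat E (dual_bases E Bs) (G j)" using FG Dm.flat_E by simp
      moreover have "G j \<noteq> {}" using FG E0 by blast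
      moreover have "F j \<noteq> E" using FG iF[OF X] by simp
      moreover have "F j \<union> G j = E" using FG Mm.cl_sub by blast
      ultimately show ?thesis unfolding is_biflat_def by simp
    next
      case False
      then have FG: "F j = E" "G j = cl E (dual_bases E Bs) (e ` {j..n - k - 1})" using F_def G_def by auto
      have Y: "e ` {j..n - k - 1} \<subseteq> T" using YT False by simp
      have "e j \<in> e ` {j..n - k - 1}" using j by simp
      then have "G j \<noteq> {}" using FG Dm.sub_cl Y TE by blast
      moreover have "G j \<noteq> E" using FG mG[OF Y] mEB by blast
      moreover have "is_flat E (dual_bases E Bs) (G j)" using FG Dm.flat_cl Y TE by auto
      moreover have "is_flat E Bs (F j)" using FG Mm.flat_E by simp
      moreover have "F j \<noteq> {}" using FG E0 by blast
      moreover have "F j \<union> G j = E" using FG Dm.cl_sub by blast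
      ultimately show ?thesis unfolding is_biflat_def by simp
    qed
  qed
  have notin: "\<And>j. 1 \<le> j \<Longrightarrow> j \<le> n - k - 1 \<Longrightarrow> m \<notin> F j \<inter> G j"
  proof -
    fix j assume j: "1 \<le> j" "j \<le> n - k - 1"
    show "m \<notin> F j \<inter> G j"
    proof (cases "j \<le> r - k")
      case True
      then show ?thesis using F_def mF XS by auto
    next
      case False
      then show ?thesis using G_def mG YT by auto
    qed
  qed
  show ?thesis
    unfolding is_biflag_def
  proof (intro conjI ballI)
    fix FG assume "FG \<in> {(F j, G j) | j. 1 \<le> j \<and> j \<le> n - k - 1}"
    then show "is_biflat E Bs FG" using biflat by blast
  next
    fix FG FG' assume a: "FG \<in> {(F j, G j) | j. 1 \<le> j \<and> j \<le> n - k - 1}"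
      "FG' \<in> {(F j, G j) | j. 1 \<le> j \<and> j \<le> n - k - 1}"
    then obtain i j where "FG = (F i, G i)" "FG' = (F j, G j)" "1 \<le> i" "i \<le> n - k - 1"
      "1 \<le> j" "j \<le> n - k - 1" by blast
    then show "compatible FG FG'" unfolding compatible_def
      using mono[of i j] mono[of j i] by (cases "i \<le> j") auto
  next
    show "(\<Union>(F, G)\<in>{(F j, G j) | j. 1 \<le> j \<and> j \<le> n - k - 1}. F \<inter> G) \<noteq> E"
      using notin mEB by blast
  qed
qed

end
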